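(* Let $Y=y[0,\dots,A-1]$ and $Z=z[0,\dots,B-1]$ ($A,B\ge1$) be finite sequences with values in a totally ordered set, each regarded on a linear domain, and let $X=x[0,\dots,A+B-1]$ be obtained by gluing them ($x[i]=y[i]$ for $i<A$, $x[A+j]=z[j]$, with $A-1$ and $A$ adjacent). Suppose the boundary extrema at the glue point — the flat of $Y$ containing $y[A-1]$ and the flat of $Z$ containing $z[0]$ — are of different types (one is a local minimum and the other a local maximum). Then either the total number of extrema of $X$ equals the sum of the numbers of extrema of $Y$ and of $Z$, or both the number of local minima and the number of local maxima of $X$ are each one less than the corresponding sums for $Y$ and $Z$.
   Context: For a sequence on a linear domain (index $i$ adjacent to $i+1$), a flat is a maximal run of consecutive indices with equal value $l$; its outer neighbours are the (at most two) indices adjacent to the run but not in it. A flat is a local minimum if all its existing outer neighbours have value $>l$, and a local maximum if all its existing outer neighbours have value $<l$. Flats at the ends of the domain are classified by their single outer neighbour, and a flat with no outer neighbour (a constant sequence) counts both as a local minimum and a local maximum. The number of extrema is the number of flats that are local minima plus the number that are local maxima. *)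

theory Defs
  imports Main
begin

text \<open>A sequence on a linear domain is a list; indices i and i+1 are adjacent.
  A flat is a maximal run of indices i..j (inclusive) carrying one value.\<close>

definition is_flat :: "'a list \<Rightarrow> nat \<Rightarrow> nat \<Rightarrow> bool" where
  "is_flat xs i j \<longleftrightarrow> i \<le> j \<and> j < length xs \<and>
     (\<forall>k. i \<le> k \<and> k \<le> j \<longrightarrow> xs ! k = xs ! i) \<and>
     (0 < i \<longrightarrow> xs ! (i - 1) \<noteq> xs ! i) \<and>
     (Suc j < length xs \<longrightarrow> xs ! Suc j \<noteq> xs ! i)"

definition flat_is_min :: "'a::linorder list \<Rightarrow> nat \<Rightarrow> nat \<Rightarrow> bool" where
  "flat_is_min xs i j \<longleftrightarrow>
     (0 < i \<longrightarrow> xs ! (i - 1) > xs ! i) \<and>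
     (Suc j < length xs \<longrightarrow> xs ! Suc j > xs ! i)"

definition flat_is_max :: "'a::linorder list \<Rightarrow> nat \<Rightarrow> nat \<Rightarrow> bool" where
  "flat_is_max xs i j \<longleftrightarrow>
     (0 < i \<longrightarrow> xs ! (i - 1) < xs ! i) \<and>
     (Suc j < length xs \<longrightarrow> xs ! Suc j < xs ! i)"

definition num_min :: "'a::linorder list \<Rightarrow> nat" where
  "num_min xs = card {(i, j). is_flat xs i j \<and> flat_is_min xs i j}"

definition num_max :: "'a::linorder list \<Rightarrow> nat" where
  "num_max xs = card {(i, j). is_flat xs i j \<and> flat_is_max xs i j}"

definition num_extrema :: "'a::linorder list \<Rightarrow> nat" where
  "num_extrema xs = num_min xs + num_max xs"

definition flat_at :: "'a list \<Rightarrow> nat \<Rightarrow> (nat \<Rightarrow> nat \<Rightarrow> bool) \<Rightarrow> bool" where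
  "flat_at xs p P \<longleftrightarrow> (\<exists>i j. is_flat xs i j \<and> i \<le> p \<and> p \<le> j \<and> P i j)"

end

theory Submission
  imports Defs
begin

lemma flat_eq: "is_flat xs i j \<Longrightarrow> i \<le> k \<Longrightarrow> k \<le> j \<Longrightarrow> xs ! k = xs ! i"
  unfolding is_flat_def by blast

lemma flat_left: "is_flat xs i j \<Longrightarrow> 0 < i \<Longrightarrow> xs ! (i - 1) \<noteq> xs ! i"
  unfolding is_flat_def by blast

lemma flat_right: "is_flat xs i j \<Longrightarrow> Suc j < length xs \<Longrightarrow> xs ! Suc j \<noteq> xs ! i"
  unfolding is_flat_def by blast

lemma flat_le: "is_flat xs i j \<Longrightarrow> i \<le> j \<and> j < length xs"
  unfolding is_flat_def by blast

lemma flat_unique: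
  assumes f1: "is_flat xs i j" and f2: "is_flat xs i' j'" and "i \<le> k" "k \<le> j" "i' \<le> k" "k \<le> j'"
  shows "i = i' \<and> j = j'"
proof -
  have "\<not> i < i'"
  proof
    assume h: "i < i'"
    have "xs!(i'-1) = xs!i" using flat_eq[OF f1, of "i'-1"] h assms by simp
    moreover have "xs!i' = xs!i" using flat_eq[OF f1, of "i'"] h assms by simp
    ultimately show False using flat_left[OF f2] h by simp
  qed
  moreover have "\<not> i' < i"
  proof
    assume h: "i' < i"
    have "xs!(i-1) = xs!i'" using flat_eq[OF f2, of "i-1"] h assms by simp
    moreover have "xs!i = xs!i'" using flat_eq[OF f2, of "i"] h assms by simp
    ultimately show False using flat_left[OF f1] h by simp
  qed
  moreover have "\<not> j < j'"
  proof
    assume h: "j < j'"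
    have "xs!(Suc j) = xs!i'" using flat_eq[OF f2, of "Suc j"] h assms by simp
    moreover have "xs!k = xs!i'" using flat_eq[OF f2, of k] assms by simp
    moreover have "xs!k = xs!i" using flat_eq[OF f1, of k] assms by simp
    moreover have "Suc j < length xs" using flat_le[OF f2] h by simp
    ultimately show False using flat_right[OF f1] by simp
  qed
  moreover have "\<not> j' < j"
  proof
    assume h: "j' < j"
    have "xs!(Suc j') = xs!i" using flat_eq[OF f1, of "Suc j'"] h assms by simp
    moreover have "xs!k = xs!i'" using flat_eq[OF f2, of k] assms by simp
    moreover have "xs!k = xs!i" using flat_eq[OF f1, of k] assms by simp
    moreover have "Suc j' < length xs" using flat_le[OF f1] h by simp
    ultimately show False using flat_right[OF f2] by simp
  qed
  ultimately show ?thesis by auto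
qed

lemma flats_finite: "finite {(i,j). is_flat xs i j \<and> R i j}"
proof -
  have "{(i,j). is_flat xs i j \<and> R i j} \<subseteq> {..<length xs} \<times> {..<length xs}"
    using flat_le[of xs] by fastforce
  then show ?thesis by (rule finite_subset) auto
qed

lemma card_split:
  assumes "p \<le> r"
  shows "card {(i,j). is_flat xs i j \<and> R i j} =
     card {(i,j). is_flat xs i j \<and> R i j \<and> j < p}
   + card {(i,j). is_flat xs i j \<and> R i j \<and> r < i}
   + card {(i,j). is_flat xs i j \<and> R i j \<and> p \<le> j \<and> i \<le> r}"
proof -
  let ?A = "{(i,j). is_flat xs i j \<and> R i j \<and> j < p}"
  let ?B = "{(i,j). is_flat xs i j \<and> R i j \<and> r < i}"
  let ?C = "{(i,j). is_flat xs i j \<and> R i j \<and> p \<le> j \<and> i \<le> r}"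
  have fA: "finite ?A" by (rule finite_subset[OF _ flats_finite[of xs R]]) auto
  have fB: "finite ?B" by (rule finite_subset[OF _ flats_finite[of xs R]]) auto
  have fC: "finite ?C" by (rule finite_subset[OF _ flats_finite[of xs R]]) auto
  have eq: "{(i,j). is_flat xs i j \<and> R i j} = (?A \<union> ?B) \<union> ?C" by auto
  have d1: "?A \<inter> ?B = {}" using assms flat_le[of xs] by fastforce
  have d2: "(?A \<union> ?B) \<inter> ?C = {}" by auto
  show ?thesis unfolding eq
    by (simp add: card_Un_disjoint[OF finite_UnI[OF fA fB] fC d2] card_Un_disjoint[OF fA fB d1])
qed

lemma mid_single:
  assumes "is_flat xs p r"
  shows "{(i,j). is_flat xs i j \<and> R i j \<and> p \<le> j \<and> i \<le> r} = (if R p r then {(p,r)} else {})"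
proof -
  have "i = p \<and> j = r" if "is_flat xs i j" "p \<le> j" "i \<le> r" for i j
  proof -
    have "i \<le> j" "p \<le> r" using flat_le[OF that(1)] flat_le[OF assms] by auto
    then show ?thesis using flat_unique[OF that(1) assms, of "max i p"] that by auto
  qed
  then show ?thesis using assms flat_le[OF assms] by auto
qed

lemma mid_double:
  assumes "is_flat xs p m" "is_flat xs (Suc m) r"
  shows "card {(i,j). is_flat xs i j \<and> R i j \<and> p \<le> j \<and> i \<le> r} =
    (if R p m then 1 else 0) + (if R (Suc m) r then 1 else 0)"
proof -
  have "(i = p \<and> j = m) \<or> (i = Suc m \<and> j = r)" if "is_flat xs i j" "p \<le> j" "i \<le> r" for i j
  proof -
    have "i \<le> j" "p \<le> m" "Suc m \<le> r" using flat_le[OF that(1)] flat_le[OF assms(1)] flat_le[OF assms(2)] by auto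
    then show ?thesis
    proof (cases "max i p \<le> m")
      case True
      show ?thesis
      proof -
        have "i = p \<and> j = m"
          by (rule flat_unique[OF that(1) assms(1), of "max i p"])
             (use True that \<open>i \<le> j\<close> \<open>p \<le> m\<close> in auto)
        then show ?thesis by simp
      qed
    next
      case False
      show ?thesis
      proof -
        have "i = Suc m \<and> j = r"
          by (rule flat_unique[OF that(1) assms(2), of "max i p"])
             (use False that \<open>i \<le> j\<close> \<open>p \<le> m\<close> \<open>Suc m \<le> r\<close> in auto)
        then show ?thesis by simp
      qed
    qed
  qed
  moreover have "p \<le> m" "Suc m \<le> r" using flat_le[OF assms(1)] flat_le[OF assms(2)] by auto
  ultimately have "{(i,j). is_flat xs i j \<and> R i j \<and> p \<le> j \<and> i \<le> r} =
     (if R p m then {(p,m)} else {}) \<union> (if R (Suc m) r then {(Suc m,r)} else {})"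
    using assms by auto
  then show ?thesis using \<open>p \<le> m\<close> by auto
qed

lemma is_flat_cong:
  assumes H: "\<And>k. k \<le> Suc j \<Longrightarrow> xs!k = ys!k" and "j < length xs" "j < length ys"
    and L: "(Suc j < length xs) = (Suc j < length ys)"
  shows "is_flat xs i j = is_flat ys i j"
proof (cases "i \<le> j")
  case True
  have A: "(\<forall>k. i \<le> k \<and> k \<le> j \<longrightarrow> xs!k = xs!i) = (\<forall>k. i \<le> k \<and> k \<le> j \<longrightarrow> ys!k = ys!i)"
  proof -
    have "xs!k = ys!k" if "k \<le> j" for k using H[of k] that by simp
    moreover have "xs!i = ys!i" using H[of i] True by simp
    ultimately show ?thesis by metis
  qed
  have B: "xs!(i-1) = ys!(i-1)" using H[of "i-1"] True by simp
  have C: "xs!(Suc j) = ys!(Suc j)" using H[of "Suc j"] by simp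
  have D: "xs!i = ys!i" using H[of i] True by simp
  show ?thesis unfolding is_flat_def A B C D using assms by simp
next
  case False
  then show ?thesis unfolding is_flat_def by simp
qed

lemma low_pt:
  assumes "j < p" "p < length ys"
  shows "is_flat (ys@zs) i j = is_flat ys i j"
    and "i \<le> j \<Longrightarrow> flat_is_min (ys@zs) i j = flat_is_min ys i j"
    and "i \<le> j \<Longrightarrow> flat_is_max (ys@zs) i j = flat_is_max ys i j"
proof -
  have H: "\<And>k. k \<le> Suc j \<Longrightarrow> (ys@zs)!k = ys!k" using assms by (simp add: nth_append)
  show "is_flat (ys@zs) i j = is_flat ys i j"
    by (rule is_flat_cong[OF H]) (use assms in auto)
  show "i \<le> j \<Longrightarrow> flat_is_min (ys@zs) i j = flat_is_min ys i j"
    unfolding flat_is_min_def using assms H[of "i-1"] H[of i] H[of "Suc j"] by simp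
  show "i \<le> j \<Longrightarrow> flat_is_max (ys@zs) i j = flat_is_max ys i j"
    unfolding flat_is_max_def using assms H[of "i-1"] H[of i] H[of "Suc j"] by simp
qed

lemma high_pt:
  assumes "0 < i"
  shows "is_flat (ys@zs) (i + length ys) (j + length ys) = is_flat zs i j"
    and "flat_is_min (ys@zs) (i + length ys) (j + length ys) = flat_is_min zs i j"
    and "flat_is_max (ys@zs) (i + length ys) (j + length ys) = flat_is_max zs i j"
proof -
  let ?n = "length ys"
  have H: "\<And>k. (ys@zs)!(k + ?n) = zs!k" by (simp add: nth_append)
  have e1: "i + ?n - 1 = (i - 1) + ?n" using assms by simp
  have H1: "(ys@zs)!(i + ?n - 1) = zs!(i-1)" unfolding e1 by (rule H)
  have A: "(\<forall>k. i + ?n \<le> k \<and> k \<le> j + ?n \<longrightarrow> (ys@zs)!k = (ys@zs)!(i + ?n)) = (\<forall>k. i \<le> k \<and> k \<le> j \<longrightarrow> zs!k = zs!i)"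
  proof
    assume L: "\<forall>k. i + ?n \<le> k \<and> k \<le> j + ?n \<longrightarrow> (ys@zs)!k = (ys@zs)!(i + ?n)"
    show "\<forall>k. i \<le> k \<and> k \<le> j \<longrightarrow> zs!k = zs!i"
    proof (intro allI impI)
      fix k assume k: "i \<le> k \<and> k \<le> j"
      have "(ys@zs)!(k + ?n) = (ys@zs)!(i + ?n)" using L[rule_format, of "k + ?n"] k by linarith
      then show "zs!k = zs!i" unfolding H .
    qed
  next
    assume R: "\<forall>k. i \<le> k \<and> k \<le> j \<longrightarrow> zs!k = zs!i"
    show "\<forall>k. i + ?n \<le> k \<and> k \<le> j + ?n \<longrightarrow> (ys@zs)!k = (ys@zs)!(i + ?n)"
    proof (intro allI impI)
      fix k assume k: "i + ?n \<le> k \<and> k \<le> j + ?n"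
      define k' where "k' = k - ?n"
      have kk: "k = k' + ?n" "i \<le> k'" "k' \<le> j" using k unfolding k'_def by auto
      have "zs!k' = zs!i" using R[rule_format, of k'] kk(2,3) by blast
      then show "(ys@zs)!k = (ys@zs)!(i + ?n)" unfolding kk(1) H .
    qed
  qed
  have HS: "(ys@zs)!(Suc (j + ?n)) = zs!(Suc j)" using H[of "Suc j"] by simp
  have HI: "(ys@zs)!(i + ?n) = zs!i" by (rule H)
  have LX: "length (ys@zs) = length zs + ?n" by simp
  show "is_flat (ys@zs) (i + ?n) (j + ?n) = is_flat zs i j"
    unfolding is_flat_def unfolding A unfolding H1 HS HI LX using assms by simp
  show "flat_is_min (ys@zs) (i + ?n) (j + ?n) = flat_is_min zs i j"
    unfolding flat_is_min_def H1 HS HI LX using assms by simp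
  show "flat_is_max (ys@zs) (i + ?n) (j + ?n) = flat_is_max zs i j"
    unfolding flat_is_max_def H1 HS HI LX using assms by simp
qed

lemma low_set:
  fixes ys zs :: "'a::linorder list"
  assumes "p < length ys" "\<And>i j. i \<le> j \<Longrightarrow> j < p \<Longrightarrow> RX i j = RY i j"
  shows "{(i,j). is_flat (ys@zs) i j \<and> RX i j \<and> j < p} = {(i,j). is_flat ys i j \<and> RY i j \<and> j < p}"
  using low_pt(1)[OF _ assms(1)] assms(2) flat_le[of ys] by blast

lemma high_card:
  fixes ys zs :: "'a::linorder list"
  assumes "\<And>i j. 0 < i \<Longrightarrow> RX (i + length ys) (j + length ys) = RZ i j"
  shows "card {(i,j). is_flat (ys@zs) i j \<and> RX i j \<and> q + length ys < i}
       = card {(i,j). is_flat zs i j \<and> RZ i j \<and> q < i}"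
proof -
  let ?n = "length ys"
  let ?f = "\<lambda>(i,j). (i + ?n, j + ?n)"
  have "{(i,j). is_flat (ys@zs) i j \<and> RX i j \<and> q + ?n < i} = ?f ` {(i,j). is_flat zs i j \<and> RZ i j \<and> q < i}"
  proof (rule set_eqI, rule iffI)
    fix x assume "x \<in> {(i,j). is_flat (ys@zs) i j \<and> RX i j \<and> q + ?n < i}"
    then obtain i j where x: "x = (i,j)" "is_flat (ys@zs) i j" "RX i j" "q + ?n < i" by auto
    then have ij: "i \<le> j" using flat_le by blast
    define i' where "i' = i - ?n"
    define j' where "j' = j - ?n"
    have e: "i = i' + ?n" "j = j' + ?n" "0 < i'" "q < i'" using x(4) ij unfolding i'_def j'_def by auto
    have "is_flat zs i' j'" "RZ i' j'" using x e high_pt(1)[of i' ys zs j'] assms[of i' j'] by auto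
    then show "x \<in> ?f ` {(i,j). is_flat zs i j \<and> RZ i j \<and> q < i}"
      using e x(1) by (auto intro!: image_eqI[of _ _ "(i',j')"])
  next
    fix x assume "x \<in> ?f ` {(i,j). is_flat zs i j \<and> RZ i j \<and> q < i}"
    then obtain i j where x: "x = (i + ?n, j + ?n)" "is_flat zs i j" "RZ i j" "q < i" by auto
    then show "x \<in> {(i,j). is_flat (ys@zs) i j \<and> RX i j \<and> q + ?n < i}"
      using high_pt(1)[of i ys zs j] assms[of i j] by auto
  qed
  moreover have "inj_on ?f A" for A by (auto simp: inj_on_def)
  ultimately show ?thesis by (simp add: card_image)
qed

lemma decomp:
  fixes ys zs :: "'a::linorder list"
  assumes ne: "ys \<noteq> []" and fy: "is_flat ys p (length ys - 1)" and fz: "is_flat zs 0 q"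
    and rl: "\<And>i j. i \<le> j \<Longrightarrow> j < p \<Longrightarrow> RX i j = RY i j"
    and rh: "\<And>i j. 0 < i \<Longrightarrow> RX (i + length ys) (j + length ys) = RZ i j"
  shows "card {(i,j). is_flat (ys@zs) i j \<and> RX i j} =
      card {(i,j). is_flat ys i j \<and> RY i j \<and> j < p}
    + card {(i,j). is_flat zs i j \<and> RZ i j \<and> q < i}
    + card {(i,j). is_flat (ys@zs) i j \<and> RX i j \<and> p \<le> j \<and> i \<le> q + length ys}"
    and "card {(i,j). is_flat ys i j \<and> RY i j} =
      card {(i,j). is_flat ys i j \<and> RY i j \<and> j < p} + (if RY p (length ys - 1) then 1 else 0)"
    and "card {(i,j). is_flat zs i j \<and> RZ i j} =
      card {(i,j). is_flat zs i j \<and> RZ i j \<and> q < i} + (if RZ 0 q then 1 else 0)"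
proof -
  have pn: "p < length ys" using flat_le[OF fy] ne by (cases ys) auto
  show "card {(i,j). is_flat (ys@zs) i j \<and> RX i j} =
      card {(i,j). is_flat ys i j \<and> RY i j \<and> j < p}
    + card {(i,j). is_flat zs i j \<and> RZ i j \<and> q < i}
    + card {(i,j). is_flat (ys@zs) i j \<and> RX i j \<and> p \<le> j \<and> i \<le> q + length ys}"
    using card_split[of p "q + length ys" "ys@zs" RX] pn low_set[OF pn rl, where zs=zs] high_card[where ys=ys and zs=zs and RX=RX and RZ=RZ and q=q, OF rh]
    by simp
  have pn1: "p \<le> length ys - 1" using pn by simp
  have e1: "{(i,j). is_flat ys i j \<and> RY i j \<and> length ys - 1 < i} = {}"
    using flat_le[of ys] by fastforce
  show "card {(i,j). is_flat ys i j \<and> RY i j} =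
      card {(i,j). is_flat ys i j \<and> RY i j \<and> j < p} + (if RY p (length ys - 1) then 1 else 0)"
    unfolding card_split[of p "length ys - 1" ys RY, OF pn1]
    unfolding e1 mid_single[OF fy, of RY] by simp
  have e2: "{(i,j). is_flat zs i j \<and> RZ i j \<and> j < 0} = {}" by simp
  show "card {(i,j). is_flat zs i j \<and> RZ i j} =
      card {(i,j). is_flat zs i j \<and> RZ i j \<and> q < i} + (if RZ 0 q then 1 else 0)"
    unfolding card_split[of 0 q zs RZ, OF le0] unfolding e2 mid_single[OF fz, of RZ] by simp
qed

theorem mainTheorem8:
  fixes ys zs :: "'a::linorder list"
  assumes "ys \<noteq> []" and "zs \<noteq> []"
    and "(flat_at ys (length ys - 1) (\<lambda>i j. flat_is_min ys i j \<and> \<not> flat_is_max ys i j) \<and>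
          flat_at zs 0 (\<lambda>i j. flat_is_max zs i j \<and> \<not> flat_is_min zs i j))
       \<or> (flat_at ys (length ys - 1) (\<lambda>i j. flat_is_max ys i j \<and> \<not> flat_is_min ys i j) \<and>
          flat_at zs 0 (\<lambda>i j. flat_is_min zs i j \<and> \<not> flat_is_max zs i j))"
  shows "num_extrema (ys @ zs) = num_extrema ys + num_extrema zs
       \<or> (num_min (ys @ zs) + 1 = num_min ys + num_min zs \<and>
          num_max (ys @ zs) + 1 = num_max ys + num_max zs)"
proof -
  define n where "n = length ys"
  define lz where "lz = length zs"
  define X where "X = ys @ zs"
  have n0: "0 < n" using assms(1) unfolding n_def by auto
  have lz0: "0 < lz" using assms(2) unfolding lz_def by auto
  have "\<exists>p. is_flat ys p (n - 1) \<and>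
     ((flat_is_min ys p (n-1) \<and> \<not> flat_is_max ys p (n-1)) \<and> (\<exists>q. is_flat zs 0 q \<and> flat_is_max zs 0 q \<and> \<not> flat_is_min zs 0 q)
    \<or> (flat_is_max ys p (n-1) \<and> \<not> flat_is_min ys p (n-1)) \<and> (\<exists>q. is_flat zs 0 q \<and> flat_is_min zs 0 q \<and> \<not> flat_is_max zs 0 q))"
  proof -
    have fy: "j = n - 1" if "is_flat ys i j" "n - 1 \<le> j" for i j
      using flat_le[OF that(1)] that(2) unfolding n_def by auto
    have fz: "i = 0" if "i \<le> 0" for i :: nat using that by auto
    show ?thesis using assms(3) unfolding flat_at_def n_def[symmetric]
      by (metis fy fz)
  qed
  then obtain p q where fyp: "is_flat ys p (n - 1)" and fzq: "is_flat zs 0 q" and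
    hyp: "(flat_is_min ys p (n-1) \<and> \<not> flat_is_max ys p (n-1)) \<and> (flat_is_max zs 0 q \<and> \<not> flat_is_min zs 0 q)
    \<or> (flat_is_max ys p (n-1) \<and> \<not> flat_is_min ys p (n-1)) \<and> (flat_is_min zs 0 q \<and> \<not> flat_is_max zs 0 q)"
    by blast
  have pn: "p < n" using flat_le[OF fyp] n0 by auto
  have ql: "q < lz" using flat_le[OF fzq] unfolding lz_def by auto
  define a where "a = ys ! (n - 1)"
  define b where "b = zs ! 0"
  define c where "c = ys ! (p - 1)"
  define d where "d = zs ! (Suc q)"
  have ya: "ys ! k = a" if "p \<le> k" "k \<le> n - 1" for k
  proof -
    have "ys ! k = ys ! p" by (rule flat_eq[OF fyp that])
    moreover have "ys ! (n - 1) = ys ! p" by (rule flat_eq[OF fyp]) (use that in auto)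
    ultimately show ?thesis unfolding a_def by simp
  qed
  have zb: "zs ! k = b" if "k \<le> q" for k
    unfolding b_def by (rule flat_eq[OF fzq]) (use that in auto)
  have yc: "0 < p \<Longrightarrow> c \<noteq> a" using flat_left[OF fyp] ya[of p] pn unfolding c_def by auto
  have zd: "Suc q < lz \<Longrightarrow> d \<noteq> b" using flat_right[OF fzq] unfolding d_def b_def lz_def by auto
  have Xl: "X ! k = ys ! k" if "k < n" for k using that unfolding X_def n_def by (simp add: nth_append)
  have Xr: "X ! (k + n) = zs ! k" for k unfolding X_def n_def by (simp add: nth_append)
  have lX: "length X = n + lz" unfolding X_def n_def lz_def by simp
  have Xp: "X ! p = a" using Xl[of p] ya[of p] pn by auto
  have Xpm: "0 < p \<Longrightarrow> X ! (p - 1) = c" using Xl[of "p-1"] pn unfolding c_def by auto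
  have Xn1: "X ! (n - 1) = a" using Xl[of "n-1"] n0 unfolding a_def by auto
  have Xn: "X ! n = b" using Xr[of 0] unfolding b_def by simp
  have Xn1': "X ! (Suc (n - 1)) = b" using Xn n0 by simp
  have Xq: "X ! (q + n) = b" using Xr[of q] zb[of q] by simp
  have Xqs: "X ! (Suc (q + n)) = d" using Xr[of "Suc q"] unfolding d_def by simp
  have XL: "X ! k = a" if "p \<le> k" "k \<le> n - 1" for k using Xl[of k] ya[OF that] that n0 by auto
  have XR: "X ! k = b" if "n \<le> k" "k \<le> q + n" for k
    using Xr[of "k - n"] zb[of "k - n"] that by auto
  have minY: "flat_is_min ys p (n-1) = (0 < p \<longrightarrow> c > a)"
    unfolding flat_is_min_def c_def using ya[of p] pn n0 unfolding n_def by auto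
  have maxY: "flat_is_max ys p (n-1) = (0 < p \<longrightarrow> c < a)"
    unfolding flat_is_max_def c_def using ya[of p] pn n0 unfolding n_def by auto
  have minZ: "flat_is_min zs 0 q = (Suc q < lz \<longrightarrow> d > b)"
    unfolding flat_is_min_def d_def b_def lz_def by auto
  have maxZ: "flat_is_max zs 0 q = (Suc q < lz \<longrightarrow> d < b)"
    unfolding flat_is_max_def d_def b_def lz_def by auto
  have minX1: "flat_is_min X p (n-1) = ((0 < p \<longrightarrow> c > a) \<and> b > a)"
    unfolding flat_is_min_def using Xp Xpm Xn1' lX n0 lz0 by auto
  have maxX1: "flat_is_max X p (n-1) = ((0 < p \<longrightarrow> c < a) \<and> b < a)"
    unfolding flat_is_max_def using Xp Xpm Xn1' lX n0 lz0 by auto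
  have minX2: "flat_is_min X (Suc (n-1)) (q + n) = (a > b \<and> (Suc q < lz \<longrightarrow> d > b))"
    unfolding flat_is_min_def using Xn Xn1 Xqs lX n0 by auto
  have maxX2: "flat_is_max X (Suc (n-1)) (q + n) = (a < b \<and> (Suc q < lz \<longrightarrow> d < b))"
    unfolding flat_is_max_def using Xn Xn1 Xqs lX n0 by auto
  have minX3: "flat_is_min X p (q + n) = ((0 < p \<longrightarrow> c > a) \<and> (Suc q < lz \<longrightarrow> d > a))"
    unfolding flat_is_min_def using Xp Xpm Xqs lX n0 by auto
  have maxX3: "flat_is_max X p (q + n) = ((0 < p \<longrightarrow> c < a) \<and> (Suc q < lz \<longrightarrow> d < a))"
    unfolding flat_is_max_def using Xp Xpm Xqs lX n0 by auto
  have fyp': "is_flat ys p (length ys - 1)" using fyp unfolding n_def .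
  have pn': "p < length ys" using pn unfolding n_def .
  have rlmin: "\<And>i j. i \<le> j \<Longrightarrow> j < p \<Longrightarrow> flat_is_min (ys@zs) i j = flat_is_min ys i j"
    by (rule low_pt(2)[OF _ pn'])
  have rlmax: "\<And>i j. i \<le> j \<Longrightarrow> j < p \<Longrightarrow> flat_is_max (ys@zs) i j = flat_is_max ys i j"
    by (rule low_pt(3)[OF _ pn'])
  have rhmin: "\<And>i j. 0 < i \<Longrightarrow> flat_is_min (ys@zs) (i + length ys) (j + length ys) = flat_is_min zs i j"
    by (rule high_pt(2))
  have rhmax: "\<And>i j. 0 < i \<Longrightarrow> flat_is_max (ys@zs) (i + length ys) (j + length ys) = flat_is_max zs i j"
    by (rule high_pt(3))
  note dmin = decomp[where RX="flat_is_min (ys@zs)" and RY="flat_is_min ys" and RZ="flat_is_min zs", OF assms(1) fyp' fzq rlmin rhmin, folded num_min_def X_def n_def]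
  note dmax = decomp[where RX="flat_is_max (ys@zs)" and RY="flat_is_max ys" and RZ="flat_is_max zs", OF assms(1) fyp' fzq rlmax rhmax, folded num_max_def X_def n_def]
  show ?thesis
  proof (cases "a = b")
    case True
    have fX: "is_flat X p (q + n)"
      unfolding is_flat_def
    proof (intro conjI impI allI)
      show "p \<le> q + n" "q + n < length X" using pn lX ql by auto
      fix k assume "p \<le> k \<and> k \<le> q + n"
      then show "X ! k = X ! p" using XL[of k] XR[of k] Xp True by (cases "k < n") auto
    next
      assume "0 < p" then show "X ! (p - 1) \<noteq> X ! p" using Xpm Xp yc by auto
    next
      assume "Suc (q + n) < length X" then show "X ! Suc (q + n) \<noteq> X ! p"
        using Xqs Xp zd lX True by auto
    qed
    have m1: "card {(i,j). is_flat X i j \<and> flat_is_min X i j \<and> p \<le> j \<and> i \<le> q + n}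
       = (if flat_is_min X p (q + n) then 1 else 0)" using mid_single[OF fX] by simp
    have m2: "card {(i,j). is_flat X i j \<and> flat_is_max X i j \<and> p \<le> j \<and> i \<le> q + n}
       = (if flat_is_max X p (q + n) then 1 else 0)" using mid_single[OF fX] by simp
    show ?thesis using hyp dmin dmax m1 m2 minY maxY minZ maxZ minX3 maxX3 True
      unfolding num_extrema_def X_def by auto
  next
    case False
    have f1: "is_flat X p (n - 1)"
      unfolding is_flat_def
    proof (intro conjI impI allI)
      show "p \<le> n - 1" "n - 1 < length X" using pn lX n0 by auto
      fix k assume "p \<le> k \<and> k \<le> n - 1"
      then show "X ! k = X ! p" using XL[of k] Xp by auto
    next
      assume "0 < p" then show "X ! (p - 1) \<noteq> X ! p" using Xpm Xp yc by auto
    next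
      assume "Suc (n - 1) < length X" then show "X ! Suc (n - 1) \<noteq> X ! p"
        using Xn1' Xp False by auto
    qed
    have f2: "is_flat X (Suc (n - 1)) (q + n)"
      unfolding is_flat_def
    proof (intro conjI impI allI)
      show "Suc (n - 1) \<le> q + n" "q + n < length X" using n0 lX ql by auto
      fix k assume "Suc (n - 1) \<le> k \<and> k \<le> q + n"
      then show "X ! k = X ! Suc (n - 1)" using XR[of k] Xn1' n0 by auto
    next
      show "X ! (Suc (n - 1) - 1) \<noteq> X ! Suc (n - 1)" using Xn1 Xn1' False by auto
    next
      assume "Suc (q + n) < length X" then show "X ! Suc (q + n) \<noteq> X ! Suc (n - 1)"
        using Xqs Xn1' zd lX by auto
    qed
    have m1: "card {(i,j). is_flat X i j \<and> flat_is_min X i j \<and> p \<le> j \<and> i \<le> q + n}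
       = (if flat_is_min X p (n - 1) then 1 else 0) + (if flat_is_min X (Suc (n - 1)) (q + n) then 1 else 0)"
      using mid_double[OF f1 f2] by simp
    have m2: "card {(i,j). is_flat X i j \<and> flat_is_max X i j \<and> p \<le> j \<and> i \<le> q + n}
       = (if flat_is_max X p (n - 1) then 1 else 0) + (if flat_is_max X (Suc (n - 1)) (q + n) then 1 else 0)"
      using mid_double[OF f1 f2] by simp
    show ?thesis using hyp dmin dmax m1 m2 minY maxY minZ maxZ minX1 maxX1 minX2 maxX2 False
      unfolding num_extrema_def X_def by auto
  qed
qed

end
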